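(* Let $R$ be a ring and $n\ge 1$ an integer. Then $R$ is NJ-symmetric if and only if the ring $T_n(R)$ of $n\times n$ upper triangular matrices over $R$ is NJ-symmetric.
   Context: Rings are associative with identity. $N(S)$ is the set of nilpotent elements, $J(S)$ the Jacobson radical of a ring $S$. $S$ is NJ-symmetric if for all $a,b,c\in S$, $abc\in N(S)$ implies $bac\in J(S)$. *)

theory Defs
  imports "HOL-Algebra.Ideal"
begin

definition nilpotents :: "('a, 'b) ring_scheme \<Rightarrow> 'a set" where
  "nilpotents S = {x \<in> carrier S. \<exists>k::nat. x [^]\<^bsub>S\<^esub> k = \<zero>\<^bsub>S\<^esub>}"

definition left_ideal :: "'a set \<Rightarrow> ('a, 'b) ring_scheme \<Rightarrow> bool" where
  "left_ideal I S \<longleftrightarrow> additive_subgroup I S \<and>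
     (\<forall>r \<in> carrier S. \<forall>x \<in> I. r \<otimes>\<^bsub>S\<^esub> x \<in> I)"

definition maximal_left_ideal :: "'a set \<Rightarrow> ('a, 'b) ring_scheme \<Rightarrow> bool" where
  "maximal_left_ideal I S \<longleftrightarrow> left_ideal I S \<and> I \<noteq> carrier S \<and>
     (\<forall>J. left_ideal J S \<and> I \<subseteq> J \<longrightarrow> J = I \<or> J = carrier S)"

text \<open>Jacobson radical J(S): intersection of all maximal left ideals
  (equal to the whole ring if there are none, i.e. for the zero ring).\<close>
definition jacobson :: "('a, 'b) ring_scheme \<Rightarrow> 'a set" where
  "jacobson S = carrier S \<inter> \<Inter> {I. maximal_left_ideal I S}"

definition NJ_symmetric :: "('a, 'b) ring_scheme \<Rightarrow> bool" where
  "NJ_symmetric S \<longleftrightarrow> (\<forall>a \<in> carrier S. \<forall>b \<in> carrier S. \<forall>c \<in> carrier S.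
     a \<otimes>\<^bsub>S\<^esub> b \<otimes>\<^bsub>S\<^esub> c \<in> nilpotents S \<longrightarrow>
     b \<otimes>\<^bsub>S\<^esub> a \<otimes>\<^bsub>S\<^esub> c \<in> jacobson S)"

text \<open>The ring T_n(R) of n x n upper triangular matrices over R.
  Matrices are functions nat => nat => 'a; entries with indices outside
  {0..<n} or below the diagonal are zero.\<close>
definition upper_tri :: "nat \<Rightarrow> ('a, 'b) ring_scheme \<Rightarrow> (nat \<Rightarrow> nat \<Rightarrow> 'a) ring" where
  "upper_tri n R =
    \<lparr> carrier = {A. \<forall>i j. (i < n \<and> j < n \<and> i \<le> j \<longrightarrow> A i j \<in> carrier R) \<and>
                         (\<not> (i < n \<and> j < n \<and> i \<le> j) \<longrightarrow> A i j = \<zero>\<^bsub>R\<^esub>)},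
      monoid.mult = (\<lambda>A B i j. if i < n \<and> j < n \<and> i \<le> j
                        then (\<Oplus>\<^bsub>R\<^esub>k\<in>{..<n}. A i k \<otimes>\<^bsub>R\<^esub> B k j) else \<zero>\<^bsub>R\<^esub>),
      one = (\<lambda>i j. if i < n \<and> i = j then \<one>\<^bsub>R\<^esub> else \<zero>\<^bsub>R\<^esub>),
      zero = (\<lambda>i j. \<zero>\<^bsub>R\<^esub>),
      add = (\<lambda>A B i j. A i j \<oplus>\<^bsub>R\<^esub> B i j) \<rparr>"

end

theory Submission
  imports Defs
begin

lemma (in ring) left_idealD:
  assumes "left_ideal I R"
  shows "I \<subseteq> carrier R" "\<zero> \<in> I" "\<And>a b. a \<in> I \<Longrightarrow> b \<in> I \<Longrightarrow> a \<oplus> b \<in> I"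
    "\<And>r x. r \<in> carrier R \<Longrightarrow> x \<in> I \<Longrightarrow> r \<otimes> x \<in> I"
proof -
  have a: "additive_subgroup I R" using assms by (simp add: left_ideal_def)
  show "I \<subseteq> carrier R" by (rule additive_subgroup.a_subset[OF a])
  show "\<zero> \<in> I" by (rule additive_subgroup.zero_closed[OF a])
  show "\<And>a b. a \<in> I \<Longrightarrow> b \<in> I \<Longrightarrow> a \<oplus> b \<in> I" by (rule additive_subgroup.a_closed[OF a])
  show "\<And>r x. r \<in> carrier R \<Longrightarrow> x \<in> I \<Longrightarrow> r \<otimes> x \<in> I" using assms by (simp add: left_ideal_def)
qed

lemma (in ring) left_idealI:
  assumes "I \<subseteq> carrier R" "\<zero> \<in> I" "\<And>a b. a \<in> I \<Longrightarrow> b \<in> I \<Longrightarrow> a \<oplus> b \<in> I"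
    "\<And>r x. r \<in> carrier R \<Longrightarrow> x \<in> I \<Longrightarrow> r \<otimes> x \<in> I"
  shows "left_ideal I R"
proof -
  have "subgroup I (add_monoid R)"
  proof (rule subgroup.intro)
    fix x assume x: "x \<in> I"
    then have xc: "x \<in> carrier R" using assms(1) by blast
    have "inv\<^bsub>add_monoid R\<^esub> x = \<ominus> x" by (simp add: a_inv_def)
    also have "\<dots> = (\<ominus> \<one>) \<otimes> x" using xc by (simp add: l_minus)
    also have "\<dots> \<in> I" using assms(4) x by simp
    finally show "inv\<^bsub>add_monoid R\<^esub> x \<in> I" .
  next
    show "I \<subseteq> carrier (add_monoid R)" using assms(1) by simp
    show "\<one>\<^bsub>add_monoid R\<^esub> \<in> I" using assms(2) by simp
    show "\<And>x y. x \<in> I \<Longrightarrow> y \<in> I \<Longrightarrow> x \<otimes>\<^bsub>add_monoid R\<^esub> y \<in> I" using assms(3) by simp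
  qed
  then show ?thesis unfolding left_ideal_def using assms(4) by (simp add: additive_subgroupI)
qed

lemma (in ring) left_ideal_one:
  assumes "left_ideal I R" "\<one> \<in> I" shows "I = carrier R"
proof
  show "I \<subseteq> carrier R" using left_idealD(1)[OF assms(1)] .
  show "carrier R \<subseteq> I"
  proof
    fix r assume "r \<in> carrier R"
    then have "r \<otimes> \<one> \<in> I" using left_idealD(4)[OF assms(1)] assms(2) by blast
    then show "r \<in> I" using \<open>r \<in> carrier R\<close> by simp
  qed
qed
lemma (in ring) exists_maximal:
  assumes "left_ideal L R" "\<one> \<notin> L"
  shows "\<exists>M. maximal_left_ideal M R \<and> L \<subseteq> M"
proof -
  define A where "A = {I. left_ideal I R \<and> L \<subseteq> I \<and> \<one> \<notin> I}"
  have "\<forall>C\<in>chains A. \<exists>U\<in>A. \<forall>X\<in>C. X \<subseteq> U"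
  proof
    fix C assume C: "C \<in> chains A"
    show "\<exists>U\<in>A. \<forall>X\<in>C. X \<subseteq> U"
    proof (cases "C = {}")
      case True then show ?thesis using assms unfolding A_def by auto
    next
      case False
      have CA: "C \<subseteq> A" and ch: "\<And>X Y. X \<in> C \<Longrightarrow> Y \<in> C \<Longrightarrow> X \<subseteq> Y \<or> Y \<subseteq> X"
        using C unfolding chains_def chain_subset_def by auto
      have li: "\<And>X. X \<in> C \<Longrightarrow> left_ideal X R" using CA unfolding A_def by auto
      have "left_ideal (\<Union>C) R"
      proof (rule left_idealI)
        show "\<Union>C \<subseteq> carrier R"
        proof
          fix a assume "a \<in> \<Union>C"
          then obtain X where "X \<in> C" "a \<in> X" by blast
          then show "a \<in> carrier R" using left_idealD(1)[OF li[of X]] by blast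
        qed
        obtain X0 where "X0 \<in> C" using False by blast
        then show "\<zero> \<in> \<Union>C" using left_idealD(2)[OF li[of X0]] by blast
        show "a \<oplus> b \<in> \<Union>C" if ab: "a \<in> \<Union>C" "b \<in> \<Union>C" for a b
        proof -
          obtain X Y where XY: "X \<in> C" "Y \<in> C" "a \<in> X" "b \<in> Y" using ab by blast
          show ?thesis
          proof (cases "X \<subseteq> Y")
            case True
            then have "a \<oplus> b \<in> Y" using left_idealD(3)[OF li[of Y]] XY by blast
            then show ?thesis using XY by blast
          next
            case False
            then have "Y \<subseteq> X" using ch XY by blast
            then have "a \<oplus> b \<in> X" using left_idealD(3)[OF li[of X]] XY by blast
            then show ?thesis using XY by blast
          qed
        qed
        show "r \<otimes> x \<in> \<Union>C" if rx: "r \<in> carrier R" "x \<in> \<Union>C" for r x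
        proof -
          obtain X where "X \<in> C" "x \<in> X" using rx by blast
          then show ?thesis using left_idealD(4)[OF li[of X] rx(1)] by blast
        qed
      qed
      moreover have "L \<subseteq> \<Union>C" using CA False unfolding A_def by auto
      moreover have "\<one> \<notin> \<Union>C" using CA unfolding A_def by auto
      ultimately show ?thesis unfolding A_def by auto
    qed
  qed
  then have "\<exists>M\<in>A. \<forall>X\<in>A. M \<subseteq> X \<longrightarrow> X = M" by (rule Zorn_Lemma2)
  then obtain M where M: "M \<in> A" "\<And>X. X \<in> A \<Longrightarrow> M \<subseteq> X \<Longrightarrow> X = M"
    by blast
  have "maximal_left_ideal M R"
    unfolding maximal_left_ideal_def
  proof (intro conjI allI impI)
    show "left_ideal M R" using M(1) unfolding A_def by simp
    show "M \<noteq> carrier R" using M(1) one_closed unfolding A_def by blast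
    fix J assume J: "left_ideal J R \<and> M \<subseteq> J"
    show "J = M \<or> J = carrier R"
    proof (cases "\<one> \<in> J")
      case True then show ?thesis using left_ideal_one[of J] J by blast
    next
      case False then have "J \<in> A" using J M(1) unfolding A_def by blast
      then show ?thesis using M(2) J by blast
    qed
  qed
  moreover have "L \<subseteq> M" using M(1) unfolding A_def by blast
  ultimately show ?thesis by blast
qed

lemma (in ring) jacobson_char:
  "x \<in> jacobson R \<longleftrightarrow> x \<in> carrier R \<and> (\<forall>y\<in>carrier R. \<exists>z\<in>carrier R. z \<otimes> (\<one> \<ominus> y \<otimes> x) = \<one>)"
proof
  assume xj: "x \<in> jacobson R"
  then have xc: "x \<in> carrier R" unfolding jacobson_def by auto
  have "\<exists>z\<in>carrier R. z \<otimes> (\<one> \<ominus> y \<otimes> x) = \<one>" if y: "y \<in> carrier R" for y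
  proof (rule ccontr)
    assume nz: "\<not> ?thesis"
    define u where "u = \<one> \<ominus> y \<otimes> x"
    have uc: "u \<in> carrier R" using xc y unfolding u_def by simp
    define L where "L = {r \<otimes> u | r. r \<in> carrier R}"
    have "left_ideal L R"
    proof (rule left_idealI)
      show "L \<subseteq> carrier R" using uc unfolding L_def by auto
      show "\<zero> \<in> L" unfolding L_def using uc by (auto intro!: exI[of _ \<zero>])
      show "a \<oplus> b \<in> L" if ab: "a \<in> L" "b \<in> L" for a b
      proof -
        obtain r1 r2 where "a = r1 \<otimes> u" "b = r2 \<otimes> u" "r1 \<in> carrier R" "r2 \<in> carrier R"
          using ab unfolding L_def by auto
        then have "a \<oplus> b = (r1 \<oplus> r2) \<otimes> u" "r1 \<oplus> r2 \<in> carrier R" using uc by (auto simp: l_distr)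
        then show ?thesis unfolding L_def by blast
      qed
      show "r \<otimes> a \<in> L" if ra: "r \<in> carrier R" "a \<in> L" for r a
      proof -
        obtain r1 where "a = r1 \<otimes> u" "r1 \<in> carrier R" using ra unfolding L_def by auto
        then have "r \<otimes> a = (r \<otimes> r1) \<otimes> u" "r \<otimes> r1 \<in> carrier R" using uc ra by (auto simp: m_assoc)
        then show ?thesis unfolding L_def by blast
      qed
    qed
    moreover have "\<one> \<notin> L" using nz unfolding L_def u_def by auto
    ultimately obtain M where M: "maximal_left_ideal M R" "L \<subseteq> M" using exists_maximal by blast
    have lM: "left_ideal M R" using M unfolding maximal_left_ideal_def by auto
    have "x \<in> M" using xj M unfolding jacobson_def by auto
    then have "y \<otimes> x \<in> M" using left_idealD(4)[OF lM] y by auto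
    moreover have "u \<in> M" using M(2) uc unfolding L_def by (force intro: exI[of _ \<one>])
    ultimately have "u \<oplus> y \<otimes> x \<in> M" using left_idealD(3)[OF lM] by auto
    moreover have "u \<oplus> y \<otimes> x = \<one>" unfolding u_def using xc y
      by (simp add: a_minus_def a_assoc l_neg)
    ultimately have "M = carrier R" using left_ideal_one lM by auto
    then show False using M unfolding maximal_left_ideal_def by auto
  qed
  then show "x \<in> carrier R \<and> (\<forall>y\<in>carrier R. \<exists>z\<in>carrier R. z \<otimes> (\<one> \<ominus> y \<otimes> x) = \<one>)"
    using xc by auto
next
  assume H: "x \<in> carrier R \<and> (\<forall>y\<in>carrier R. \<exists>z\<in>carrier R. z \<otimes> (\<one> \<ominus> y \<otimes> x) = \<one>)"
  then have xc: "x \<in> carrier R" by auto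
  have "x \<in> M" if M: "maximal_left_ideal M R" for M
  proof (rule ccontr)
    assume xM: "x \<notin> M"
    have lM: "left_ideal M R" using M unfolding maximal_left_ideal_def by auto
    note Md = left_idealD[OF lM]
    define L where "L = {m \<oplus> y \<otimes> x | m y. m \<in> M \<and> y \<in> carrier R}"
    have lL: "left_ideal L R"
    proof (rule left_idealI)
      show "L \<subseteq> carrier R" using xc Md(1) unfolding L_def by (auto simp: subsetD)
      have "\<zero> = \<zero> \<oplus> \<zero> \<otimes> x" using xc by simp
      then show "\<zero> \<in> L" unfolding L_def using Md(2) by blast
      show "a \<oplus> b \<in> L" if ab: "a \<in> L" "b \<in> L" for a b
      proof -
        obtain m1 y1 m2 y2 where "a = m1 \<oplus> y1 \<otimes> x" "b = m2 \<oplus> y2 \<otimes> x" "m1 \<in> M" "m2 \<in> M"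
          "y1 \<in> carrier R" "y2 \<in> carrier R" using ab unfolding L_def by auto
        moreover have "m1 \<oplus> y1 \<otimes> x \<oplus> (m2 \<oplus> y2 \<otimes> x) = (m1 \<oplus> m2) \<oplus> (y1 \<oplus> y2) \<otimes> x"
          using calculation(3-6) xc Md(1) by (simp add: l_distr subsetD a_ac)
        ultimately show ?thesis unfolding L_def using Md(3) by blast
      qed
      show "r \<otimes> a \<in> L" if ra: "r \<in> carrier R" "a \<in> L" for r a
      proof -
        obtain m y where "a = m \<oplus> y \<otimes> x" "m \<in> M" "y \<in> carrier R" using ra unfolding L_def by auto
        moreover have "r \<otimes> (m \<oplus> y \<otimes> x) = r \<otimes> m \<oplus> (r \<otimes> y) \<otimes> x"
          using calculation xc Md(1) ra(1) by (simp add: r_distr m_assoc subsetD)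
        ultimately show ?thesis unfolding L_def using Md(4) ra(1) by blast
      qed
    qed
    have "M \<subseteq> L"
    proof
      fix m assume m: "m \<in> M"
      then have "m = m \<oplus> \<zero> \<otimes> x" using xc Md(1) by (auto simp: subsetD)
      then show "m \<in> L" unfolding L_def using m by blast
    qed
    moreover have "x \<in> L"
    proof -
      have "x = \<zero> \<oplus> \<one> \<otimes> x" using xc by simp
      then show ?thesis unfolding L_def using Md(2) by blast
    qed
    ultimately have "L \<noteq> M" "M \<subseteq> L" using xM by auto
    moreover have "\<forall>J. left_ideal J R \<and> M \<subseteq> J \<longrightarrow> J = M \<or> J = carrier R"
      using M unfolding maximal_left_ideal_def by blast
    ultimately have "L = carrier R" using lL by blast
    then have "\<one> \<in> L" by simp
    then obtain m y where my: "\<one> = m \<oplus> y \<otimes> x" "m \<in> M" "y \<in> carrier R" unfolding L_def by blast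
    then have mc: "m \<in> carrier R" using Md(1) by auto
    have "\<one> \<ominus> y \<otimes> x = (m \<oplus> y \<otimes> x) \<ominus> y \<otimes> x" using my(1) by simp
    also have "\<dots> = m" using my(3) mc xc by (simp add: a_minus_def a_assoc r_neg)
    finally have "\<one> \<ominus> y \<otimes> x = m" .
    moreover obtain z where "z \<in> carrier R" "z \<otimes> (\<one> \<ominus> y \<otimes> x) = \<one>" using H my by auto
    ultimately have "z \<otimes> m = \<one>" "z \<in> carrier R" by auto
    then have "\<one> \<in> M" using Md(4)[of z m] my(2) by simp
    then show False using left_ideal_one lM M unfolding maximal_left_ideal_def by auto
  qed
  then show "x \<in> jacobson R" unfolding jacobson_def using xc by auto
qed

context ring
begin
lemma finsum_swap:
  assumes "finite A" "finite B" "\<And>k l. f k l \<in> carrier R"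
  shows "(\<Oplus>k\<in>A. \<Oplus>l\<in>B. f k l) = (\<Oplus>l\<in>B. \<Oplus>k\<in>A. f k l)"
  using assms(1)
proof (induction A rule: finite_induct)
  case empty
  then show ?case by simp
next
  case (insert a A)
  have "(\<Oplus>k\<in>insert a A. \<Oplus>l\<in>B. f k l) = (\<Oplus>l\<in>B. f a l) \<oplus> (\<Oplus>k\<in>A. \<Oplus>l\<in>B. f k l)"
    using insert assms by (simp add: finsum_insert)
  also have "\<dots> = (\<Oplus>l\<in>B. f a l) \<oplus> (\<Oplus>l\<in>B. \<Oplus>k\<in>A. f k l)" using insert by simp
  also have "\<dots> = (\<Oplus>l\<in>B. f a l \<oplus> (\<Oplus>k\<in>A. f k l))"
    using assms by (simp add: finsum_addf)
  also have "\<dots> = (\<Oplus>l\<in>B. \<Oplus>k\<in>insert a A. f k l)"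
    using insert assms by (intro finsum_cong') (auto simp: finsum_insert)
  finally show ?case .
qed

lemma finsum_single:
  assumes "finite A" "i \<in> A" "\<And>k. k \<in> A \<Longrightarrow> k \<noteq> i \<Longrightarrow> f k = \<zero>"
    "\<And>k. f k \<in> carrier R"
  shows "(\<Oplus>k\<in>A. f k) = f i"
proof -
  have "(\<Oplus>k\<in>A. f k) = (\<Oplus>k\<in>A. if i = k then f k else \<zero>)"
    using assms by (intro finsum_cong') auto
  also have "\<dots> = f i" using assms by (intro finsum_singleton) auto
  finally show ?thesis .
qed

lemma finsum_zero':
  assumes "\<And>k. k \<in> A \<Longrightarrow> f k = \<zero>"
  shows "(\<Oplus>k\<in>A. f k) = \<zero>"
proof -
  have "(\<Oplus>k\<in>A. f k) = (\<Oplus>k\<in>A. \<zero>)" using assms by (intro finsum_cong') auto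
  then show ?thesis by simp
qed


lemma UT_simps:
  "carrier (upper_tri n R) = {A. \<forall>i j. (i < n \<and> j < n \<and> i \<le> j \<longrightarrow> A i j \<in> carrier R) \<and>
                         (\<not> (i < n \<and> j < n \<and> i \<le> j) \<longrightarrow> A i j = \<zero>)}"
  "A \<otimes>\<^bsub>upper_tri n R\<^esub> B = (\<lambda>i j. if i < n \<and> j < n \<and> i \<le> j
                        then (\<Oplus>k\<in>{..<n}. A i k \<otimes> B k j) else \<zero>)"
  "\<one>\<^bsub>upper_tri n R\<^esub> = (\<lambda>i j. if i < n \<and> i = j then \<one> else \<zero>)"
  "\<zero>\<^bsub>upper_tri n R\<^esub> = (\<lambda>i j. \<zero>)"
  "A \<oplus>\<^bsub>upper_tri n R\<^esub> B = (\<lambda>i j. A i j \<oplus> B i j)"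
  by (simp_all add: upper_tri_def)

lemma UT_entry: "A \<in> carrier (upper_tri n R) \<Longrightarrow> A i j \<in> carrier R"
  unfolding UT_simps by (cases "i < n \<and> j < n \<and> i \<le> j") auto

lemma UT_zero: "A \<in> carrier (upper_tri n R) \<Longrightarrow> \<not> (i < n \<and> j < n \<and> i \<le> j) \<Longrightarrow> A i j = \<zero>"
  unfolding UT_simps by auto

lemma UT_mult_eq:
  assumes A: "A \<in> carrier (upper_tri n R)" and B: "B \<in> carrier (upper_tri n R)"
  shows "(A \<otimes>\<^bsub>upper_tri n R\<^esub> B) i j = (if i < n \<and> j < n then (\<Oplus>k\<in>{..<n}. A i k \<otimes> B k j) else \<zero>)"
proof (cases "i < n \<and> j < n \<and> j < i")
  case True
  have "(\<Oplus>k\<in>{..<n}. A i k \<otimes> B k j) = \<zero>"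
  proof (rule finsum_zero')
    fix k assume "k \<in> {..<n}"
    show "A i k \<otimes> B k j = \<zero>"
    proof (cases "k < i")
      case True then show ?thesis using UT_zero[OF A, of i k] UT_entry[OF B] by simp
    next
      case False then show ?thesis using True UT_zero[OF B, of k j] UT_entry[OF A] by simp
    qed
  qed
  then show ?thesis using True by (simp add: UT_simps)
next
  case False then show ?thesis by (auto simp: UT_simps)
qed

lemma UT_mult_closed:
  assumes A: "A \<in> carrier (upper_tri n R)" and B: "B \<in> carrier (upper_tri n R)"
  shows "A \<otimes>\<^bsub>upper_tri n R\<^esub> B \<in> carrier (upper_tri n R)"
  unfolding UT_simps(1) using UT_entry[OF A] UT_entry[OF B]
  by (auto simp: UT_simps(2) intro!: finsum_closed)

lemma UT_one_closed: "\<one>\<^bsub>upper_tri n R\<^esub> \<in> carrier (upper_tri n R)"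
  by (auto simp: UT_simps)

lemma UT_mult_assoc:
  assumes A: "A \<in> carrier (upper_tri n R)" and B: "B \<in> carrier (upper_tri n R)"
    and Cm: "Cm \<in> carrier (upper_tri n R)"
  shows "(A \<otimes>\<^bsub>upper_tri n R\<^esub> B) \<otimes>\<^bsub>upper_tri n R\<^esub> Cm =
         A \<otimes>\<^bsub>upper_tri n R\<^esub> (B \<otimes>\<^bsub>upper_tri n R\<^esub> Cm)"
proof (intro ext)
  fix i j
  note e = UT_entry[OF A] UT_entry[OF B] UT_entry[OF Cm]
  show "((A \<otimes>\<^bsub>upper_tri n R\<^esub> B) \<otimes>\<^bsub>upper_tri n R\<^esub> Cm) i j =
         (A \<otimes>\<^bsub>upper_tri n R\<^esub> (B \<otimes>\<^bsub>upper_tri n R\<^esub> Cm)) i j"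
  proof (cases "i < n \<and> j < n")
    case True
    have "((A \<otimes>\<^bsub>upper_tri n R\<^esub> B) \<otimes>\<^bsub>upper_tri n R\<^esub> Cm) i j =
      (\<Oplus>k\<in>{..<n}. (\<Oplus>l\<in>{..<n}. A i l \<otimes> B l k) \<otimes> Cm k j)"
      using True e by (simp add: UT_mult_eq[OF UT_mult_closed[OF A B] Cm])
        (intro finsum_cong', auto simp: UT_mult_eq[OF A B] intro!: finsum_closed)
    also have "\<dots> = (\<Oplus>k\<in>{..<n}. \<Oplus>l\<in>{..<n}. A i l \<otimes> B l k \<otimes> Cm k j)"
      using e by (intro finsum_cong') (auto simp: finsum_ldistr)
    also have "\<dots> = (\<Oplus>l\<in>{..<n}. \<Oplus>k\<in>{..<n}. A i l \<otimes> B l k \<otimes> Cm k j)"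
      using e by (intro finsum_swap) auto
    also have "\<dots> = (\<Oplus>l\<in>{..<n}. A i l \<otimes> (\<Oplus>k\<in>{..<n}. B l k \<otimes> Cm k j))"
      using e by (intro finsum_cong') (auto simp: finsum_rdistr m_assoc)
    also have "\<dots> = (A \<otimes>\<^bsub>upper_tri n R\<^esub> (B \<otimes>\<^bsub>upper_tri n R\<^esub> Cm)) i j"
      using True e by (simp add: UT_mult_eq[OF A UT_mult_closed[OF B Cm]])
        (intro finsum_cong', auto simp: UT_mult_eq[OF B Cm] intro!: finsum_closed)
    finally show ?thesis .
  next
    case False then show ?thesis by (auto simp: UT_simps)
  qed
qed


lemma UT_one_mult:
  assumes B: "B \<in> carrier (upper_tri n R)"
  shows "\<one>\<^bsub>upper_tri n R\<^esub> \<otimes>\<^bsub>upper_tri n R\<^esub> B = B"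
proof (intro ext)
  fix i j
  show "(\<one>\<^bsub>upper_tri n R\<^esub> \<otimes>\<^bsub>upper_tri n R\<^esub> B) i j = B i j"
  proof (cases "i < n \<and> j < n")
    case True
    have "(\<Oplus>k\<in>{..<n}. \<one>\<^bsub>upper_tri n R\<^esub> i k \<otimes> B k j) = \<one>\<^bsub>upper_tri n R\<^esub> i i \<otimes> B i j"
      using True UT_entry[OF B] UT_entry[OF UT_one_closed]
      by (intro finsum_single) (auto simp: UT_simps)
    then show ?thesis using True UT_entry[OF B] by (simp add: UT_mult_eq[OF UT_one_closed B]) (simp add: UT_simps)
  next
    case False then show ?thesis using UT_zero[OF B] by (auto simp: UT_simps)
  qed
qed

lemma UT_mult_one:
  assumes B: "B \<in> carrier (upper_tri n R)"
  shows "B \<otimes>\<^bsub>upper_tri n R\<^esub> \<one>\<^bsub>upper_tri n R\<^esub> = B"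
proof (intro ext)
  fix i j
  show "(B \<otimes>\<^bsub>upper_tri n R\<^esub> \<one>\<^bsub>upper_tri n R\<^esub>) i j = B i j"
  proof (cases "i < n \<and> j < n")
    case True
    have "(\<Oplus>k\<in>{..<n}. B i k \<otimes> \<one>\<^bsub>upper_tri n R\<^esub> k j) = B i j \<otimes> \<one>\<^bsub>upper_tri n R\<^esub> j j"
      using True UT_entry[OF B] UT_entry[OF UT_one_closed]
      by (intro finsum_single) (auto simp: UT_simps)
    then show ?thesis using True UT_entry[OF B] by (simp add: UT_mult_eq[OF B UT_one_closed]) (simp add: UT_simps)
  next
    case False then show ?thesis using UT_zero[OF B] by (auto simp: UT_simps)
  qed
qed

lemma UT_add_closed:
  assumes A: "A \<in> carrier (upper_tri n R)" and B: "B \<in> carrier (upper_tri n R)"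
  shows "A \<oplus>\<^bsub>upper_tri n R\<^esub> B \<in> carrier (upper_tri n R)"
  using UT_entry[OF A] UT_entry[OF B] UT_zero[OF A] UT_zero[OF B] unfolding UT_simps(1)
  by (auto simp: UT_simps(5))

lemma UT_abelian_group: "abelian_group (upper_tri n R)"
proof (rule abelian_groupI)
  show "\<zero>\<^bsub>upper_tri n R\<^esub> \<in> carrier (upper_tri n R)" by (simp add: UT_simps)
  fix x assume x: "x \<in> carrier (upper_tri n R)"
  note ex = UT_entry[OF x] UT_zero[OF x]
  show "\<zero>\<^bsub>upper_tri n R\<^esub> \<oplus>\<^bsub>upper_tri n R\<^esub> x = x" using ex by (simp add: UT_simps)
  show "\<exists>y\<in>carrier (upper_tri n R). y \<oplus>\<^bsub>upper_tri n R\<^esub> x = \<zero>\<^bsub>upper_tri n R\<^esub>"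
  proof (intro bexI)
    show "(\<lambda>i j. \<ominus> x i j) \<oplus>\<^bsub>upper_tri n R\<^esub> x = \<zero>\<^bsub>upper_tri n R\<^esub>"
      using ex by (simp add: UT_simps l_neg)
    show "(\<lambda>i j. \<ominus> x i j) \<in> carrier (upper_tri n R)"
      using ex unfolding UT_simps(1) by auto
  qed
  fix y assume y: "y \<in> carrier (upper_tri n R)"
  note ey = UT_entry[OF y]
  show "x \<oplus>\<^bsub>upper_tri n R\<^esub> y \<in> carrier (upper_tri n R)" using UT_add_closed x y .
  show "x \<oplus>\<^bsub>upper_tri n R\<^esub> y = y \<oplus>\<^bsub>upper_tri n R\<^esub> x"
    using ex ey by (simp add: UT_simps a_comm)
  fix z assume z: "z \<in> carrier (upper_tri n R)"
  show "x \<oplus>\<^bsub>upper_tri n R\<^esub> y \<oplus>\<^bsub>upper_tri n R\<^esub> z = x \<oplus>\<^bsub>upper_tri n R\<^esub> (y \<oplus>\<^bsub>upper_tri n R\<^esub> z)"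
    using ex ey UT_entry[OF z] by (simp add: UT_simps a_assoc)
qed

lemma UT_monoid: "monoid (upper_tri n R)"
  by (rule monoidI) (auto simp: UT_mult_closed UT_one_closed UT_mult_assoc UT_one_mult UT_mult_one)

lemma UT_ring: "ring (upper_tri n R)"
proof (rule ringI[OF UT_abelian_group UT_monoid])
  fix x y z assume x: "x \<in> carrier (upper_tri n R)" and y: "y \<in> carrier (upper_tri n R)"
    and z: "z \<in> carrier (upper_tri n R)"
  note e = UT_entry[OF x] UT_entry[OF y] UT_entry[OF z]
  have xy: "x \<oplus>\<^bsub>upper_tri n R\<^esub> y \<in> carrier (upper_tri n R)" using UT_add_closed x y .
  have yz: "y \<oplus>\<^bsub>upper_tri n R\<^esub> z \<in> carrier (upper_tri n R)" using UT_add_closed y z .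
  show "(x \<oplus>\<^bsub>upper_tri n R\<^esub> y) \<otimes>\<^bsub>upper_tri n R\<^esub> z =
    x \<otimes>\<^bsub>upper_tri n R\<^esub> z \<oplus>\<^bsub>upper_tri n R\<^esub> y \<otimes>\<^bsub>upper_tri n R\<^esub> z"
  proof (intro ext)
    fix i j
    show "((x \<oplus>\<^bsub>upper_tri n R\<^esub> y) \<otimes>\<^bsub>upper_tri n R\<^esub> z) i j =
     (x \<otimes>\<^bsub>upper_tri n R\<^esub> z \<oplus>\<^bsub>upper_tri n R\<^esub> y \<otimes>\<^bsub>upper_tri n R\<^esub> z) i j"
      using e by (simp add: UT_simps(2,5) l_distr finsum_addf)
  qed
  show "z \<otimes>\<^bsub>upper_tri n R\<^esub> (x \<oplus>\<^bsub>upper_tri n R\<^esub> y) =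
    z \<otimes>\<^bsub>upper_tri n R\<^esub> x \<oplus>\<^bsub>upper_tri n R\<^esub> z \<otimes>\<^bsub>upper_tri n R\<^esub> y"
  proof (intro ext)
    fix i j
    show "(z \<otimes>\<^bsub>upper_tri n R\<^esub> (x \<oplus>\<^bsub>upper_tri n R\<^esub> y)) i j =
     (z \<otimes>\<^bsub>upper_tri n R\<^esub> x \<oplus>\<^bsub>upper_tri n R\<^esub> z \<otimes>\<^bsub>upper_tri n R\<^esub> y) i j"
      using e by (simp add: UT_simps(2,5) r_distr finsum_addf)
  qed
qed


lemma UT_a_inv:
  assumes B: "B \<in> carrier (upper_tri n R)"
  shows "\<ominus>\<^bsub>upper_tri n R\<^esub> B = (\<lambda>i j. \<ominus> B i j)"
proof -
  interpret T: ring "upper_tri n R" by (rule UT_ring)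
  have c: "(\<lambda>i j. \<ominus> B i j) \<in> carrier (upper_tri n R)"
    using UT_entry[OF B] UT_zero[OF B] unfolding UT_simps(1) by auto
  have "(\<lambda>i j. \<ominus> B i j) \<oplus>\<^bsub>upper_tri n R\<^esub> B = \<zero>\<^bsub>upper_tri n R\<^esub>"
    using UT_entry[OF B] by (simp add: UT_simps l_neg)
  then show ?thesis using T.minus_equality c B by blast
qed

lemma UT_minus:
  assumes A: "A \<in> carrier (upper_tri n R)" and B: "B \<in> carrier (upper_tri n R)"
  shows "(A \<ominus>\<^bsub>upper_tri n R\<^esub> B) i j = A i j \<ominus> B i j"
  by (simp add: a_minus_def UT_a_inv[OF B] UT_simps)

lemma UT_diag:
  assumes A: "A \<in> carrier (upper_tri n R)" and B: "B \<in> carrier (upper_tri n R)" and i: "i < n"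
  shows "(A \<otimes>\<^bsub>upper_tri n R\<^esub> B) i i = A i i \<otimes> B i i"
proof -
  have "(\<Oplus>k\<in>{..<n}. A i k \<otimes> B k i) = A i i \<otimes> B i i"
  proof (rule finsum_single)
    fix k assume "k \<in> {..<n}" "k \<noteq> i"
    then show "A i k \<otimes> B k i = \<zero>"
      using UT_zero[OF A, of i k] UT_zero[OF B, of k i] UT_entry[OF A] UT_entry[OF B]
      by (cases "k < i") auto
  qed (use i UT_entry[OF A] UT_entry[OF B] in auto)
  then show ?thesis using i by (simp add: UT_mult_eq[OF A B])
qed

lemma UT_pow_diag:
  assumes A: "A \<in> carrier (upper_tri n R)" and i: "i < n"
  shows "(A [^]\<^bsub>upper_tri n R\<^esub> (k::nat)) i i = A i i [^] k"
proof (induction k)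
  case 0
  then show ?case using i by (simp add: UT_simps)
next
  case (Suc k)
  interpret T: ring "upper_tri n R" by (rule UT_ring)
  have "A [^]\<^bsub>upper_tri n R\<^esub> k \<in> carrier (upper_tri n R)" using A by simp
  then show ?case using Suc UT_diag[OF _ A i] by simp
qed

definition strict :: "nat \<Rightarrow> (nat \<Rightarrow> nat \<Rightarrow> 'a) \<Rightarrow> bool" where
  "strict k A \<longleftrightarrow> (\<forall>i j. j < i + k \<longrightarrow> A i j = \<zero>)"

lemma UT_strict_mult:
  assumes A: "A \<in> carrier (upper_tri n R)" and B: "B \<in> carrier (upper_tri n R)"
    and sA: "strict a A" and sB: "strict b B"
  shows "strict (a + b) (A \<otimes>\<^bsub>upper_tri n R\<^esub> B)"
  unfolding strict_def
proof (intro allI impI)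
  fix i j assume ij: "j < i + (a + b)"
  have "(\<Oplus>k\<in>{..<n}. A i k \<otimes> B k j) = \<zero>"
  proof (rule finsum_zero')
    fix k assume "k \<in> {..<n}"
    show "A i k \<otimes> B k j = \<zero>"
    proof (cases "k < i + a")
      case True then show ?thesis using sA UT_entry[OF B] unfolding strict_def by simp
    next
      case False then have "j < k + b" using ij by simp
      then show ?thesis using sB UT_entry[OF A] unfolding strict_def by simp
    qed
  qed
  then show "(A \<otimes>\<^bsub>upper_tri n R\<^esub> B) i j = \<zero>" by (simp add: UT_mult_eq[OF A B])
qed

lemma UT_strict_pow:
  assumes N: "N \<in> carrier (upper_tri n R)" and sN: "strict 1 N"
  shows "strict k (N [^]\<^bsub>upper_tri n R\<^esub> (k::nat))"
proof (induction k)
  case 0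
  then show ?case by (simp add: strict_def UT_simps)
next
  case (Suc k)
  interpret T: ring "upper_tri n R" by (rule UT_ring)
  have "N [^]\<^bsub>upper_tri n R\<^esub> k \<in> carrier (upper_tri n R)" using N by simp
  then show ?case using UT_strict_mult[OF _ N Suc sN] by simp
qed

lemma UT_strict_nilpotent:
  assumes N: "N \<in> carrier (upper_tri n R)" and d: "\<And>i. i < n \<Longrightarrow> N i i = \<zero>"
  shows "N [^]\<^bsub>upper_tri n R\<^esub> n = \<zero>\<^bsub>upper_tri n R\<^esub>"
proof -
  interpret T: ring "upper_tri n R" by (rule UT_ring)
  have "strict 1 N" unfolding strict_def
  proof (intro allI impI)
    fix i j :: nat assume "j < i + 1"
    then show "N i j = \<zero>" using d UT_zero[OF N, of i j] by (cases "j = i") auto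
  qed
  then have s: "strict n (N [^]\<^bsub>upper_tri n R\<^esub> n)" by (rule UT_strict_pow[OF N])
  have c: "N [^]\<^bsub>upper_tri n R\<^esub> n \<in> carrier (upper_tri n R)" using N by simp
  show ?thesis
  proof (intro ext)
    fix i j :: nat
    show "(N [^]\<^bsub>upper_tri n R\<^esub> n) i j = \<zero>\<^bsub>upper_tri n R\<^esub> i j"
    proof (cases "j < n")
      case True then show ?thesis using s unfolding strict_def by (simp add: UT_simps)
    next
      case False then show ?thesis using UT_zero[OF c, of i j] by (simp add: UT_simps)
    qed
  qed
qed

end

lemma (in ring) nil_left_inv:
  assumes N: "N \<in> carrier R" and k: "N [^] (k::nat) = \<zero>"
  shows "\<exists>z\<in>carrier R. z \<otimes> (\<one> \<ominus> N) = \<one>"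
proof -
  have "\<exists>z\<in>carrier R. z \<otimes> (\<one> \<ominus> N) = \<one> \<ominus> N [^] m" for m :: nat
  proof (induction m)
    case 0
    then show ?case by (intro bexI[of _ \<zero>]) (auto simp: a_minus_def r_neg N)
  next
    case (Suc m)
    then obtain z where z: "z \<in> carrier R" "z \<otimes> (\<one> \<ominus> N) = \<one> \<ominus> N [^] m" by blast
    have "(z \<oplus> N [^] m) \<otimes> (\<one> \<ominus> N) = z \<otimes> (\<one> \<ominus> N) \<oplus> N [^] m \<otimes> (\<one> \<ominus> N)"
      using z N by (simp add: l_distr)
    also have "\<dots> = (\<one> \<ominus> N [^] m) \<oplus> (N [^] m \<ominus> N [^] Suc m)"
      using z N by (simp add: a_minus_def r_distr r_minus nat_pow_Suc)
    also have "\<dots> = \<one> \<ominus> N [^] Suc m"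
      using N by (simp add: a_minus_def a_assoc r_neg1 del: nat_pow_Suc)
    finally show ?case using z N by (intro bexI[of _ "z \<oplus> N [^] m"]) auto
  qed
  then show ?thesis using k by (metis N a_minus_def minus_zero one_closed r_zero)
qed


context ring
begin

lemma UT_left_inv:
  assumes U: "U \<in> carrier (upper_tri n R)"
    and d: "\<And>i. i < n \<Longrightarrow> \<exists>v\<in>carrier R. v \<otimes> U i i = \<one>"
  shows "\<exists>Z\<in>carrier (upper_tri n R). Z \<otimes>\<^bsub>upper_tri n R\<^esub> U = \<one>\<^bsub>upper_tri n R\<^esub>"
proof -
  interpret T: ring "upper_tri n R" by (rule UT_ring)
  obtain f where f: "\<And>i. i < n \<Longrightarrow> f i \<in> carrier R \<and> f i \<otimes> U i i = \<one>"
    using d by metis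
  define D where "D = (\<lambda>i j. if i < n \<and> i = j then f i else \<zero>)"
  have Dc: "D \<in> carrier (upper_tri n R)" unfolding UT_simps(1) D_def using f by auto
  define X where "X = D \<otimes>\<^bsub>upper_tri n R\<^esub> U"
  have Xc: "X \<in> carrier (upper_tri n R)" unfolding X_def using Dc U by simp
  define N where "N = \<one>\<^bsub>upper_tri n R\<^esub> \<ominus>\<^bsub>upper_tri n R\<^esub> X"
  have Nc: "N \<in> carrier (upper_tri n R)" unfolding N_def using Xc by simp
  have "N i i = \<zero>" if i: "i < n" for i
  proof -
    have "X i i = \<one>" unfolding X_def using UT_diag[OF Dc U i] f[OF i] i by (simp add: D_def)
    then show ?thesis unfolding N_def using UT_minus[OF UT_one_closed Xc] i
      by (simp add: UT_simps a_minus_def r_neg)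
  qed
  then have "N [^]\<^bsub>upper_tri n R\<^esub> n = \<zero>\<^bsub>upper_tri n R\<^esub>" by (rule UT_strict_nilpotent[OF Nc])
  then obtain z where z: "z \<in> carrier (upper_tri n R)"
    "z \<otimes>\<^bsub>upper_tri n R\<^esub> (\<one>\<^bsub>upper_tri n R\<^esub> \<ominus>\<^bsub>upper_tri n R\<^esub> N) = \<one>\<^bsub>upper_tri n R\<^esub>"
    using T.nil_left_inv[OF Nc] by blast
  have "\<one>\<^bsub>upper_tri n R\<^esub> \<ominus>\<^bsub>upper_tri n R\<^esub> N = X"
    unfolding N_def using Xc by (simp add: a_minus_def T.minus_add T.r_neg2)
  then have "(z \<otimes>\<^bsub>upper_tri n R\<^esub> D) \<otimes>\<^bsub>upper_tri n R\<^esub> U = \<one>\<^bsub>upper_tri n R\<^esub>"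
    using z Dc U unfolding X_def by (simp add: T.m_assoc)
  then show ?thesis using z Dc by blast
qed

definition sc :: "nat \<Rightarrow> 'a \<Rightarrow> nat \<Rightarrow> nat \<Rightarrow> 'a" where
  "sc n s = (\<lambda>i j. if i < n \<and> i = j then s else \<zero>)"

lemma sc_closed: "s \<in> carrier R \<Longrightarrow> sc n s \<in> carrier (upper_tri n R)"
  unfolding sc_def UT_simps(1) by auto

lemma sc_mult:
  assumes s: "s \<in> carrier R" and t: "t \<in> carrier R"
  shows "sc n s \<otimes>\<^bsub>upper_tri n R\<^esub> sc n t = sc n (s \<otimes> t)"
proof (intro ext)
  fix i j :: nat
  show "(sc n s \<otimes>\<^bsub>upper_tri n R\<^esub> sc n t) i j = sc n (s \<otimes> t) i j"
  proof (cases "i < n \<and> j < n")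
    case True
    have "(\<Oplus>k\<in>{..<n}. sc n s i k \<otimes> sc n t k j) = sc n s i i \<otimes> sc n t i j"
      using True s t by (intro finsum_single) (auto simp: sc_def)
    then show ?thesis using True s t
      by (simp add: UT_mult_eq[OF sc_closed[OF s] sc_closed[OF t]]) (simp add: sc_def)
  next
    case False then show ?thesis by (auto simp: UT_simps sc_def)
  qed
qed

lemma sc_pow:
  assumes s: "s \<in> carrier R"
  shows "sc n s [^]\<^bsub>upper_tri n R\<^esub> (k::nat) = sc n (s [^] k)"
proof (induction k)
  case 0
  then show ?case by (simp add: UT_simps sc_def)
next
  case (Suc k)
  then show ?case using sc_mult[OF nat_pow_closed[OF s] s] by simp
qed

end


lemma (in ring) main:
  assumes "n \<ge> 1"
  shows "NJ_symmetric R \<longleftrightarrow> NJ_symmetric (upper_tri n R)"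
proof -
  interpret T: ring "upper_tri n R" by (rule UT_ring)
  show ?thesis
  proof
    assume NJ: "NJ_symmetric R"
    show "NJ_symmetric (upper_tri n R)" unfolding NJ_symmetric_def
    proof (intro ballI impI)
      fix A B Cm assume A: "A \<in> carrier (upper_tri n R)" and B: "B \<in> carrier (upper_tri n R)"
        and Cm: "Cm \<in> carrier (upper_tri n R)"
        and nil: "A \<otimes>\<^bsub>upper_tri n R\<^esub> B \<otimes>\<^bsub>upper_tri n R\<^esub> Cm \<in> nilpotents (upper_tri n R)"
      obtain k where k: "(A \<otimes>\<^bsub>upper_tri n R\<^esub> B \<otimes>\<^bsub>upper_tri n R\<^esub> Cm) [^]\<^bsub>upper_tri n R\<^esub> (k::nat)
          = \<zero>\<^bsub>upper_tri n R\<^esub>"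
        using nil unfolding nilpotents_def by blast
      have eA: "A i i \<in> carrier R" "B i i \<in> carrier R" "Cm i i \<in> carrier R" for i
        using UT_entry[OF A] UT_entry[OF B] UT_entry[OF Cm] by auto
      have dJ: "B i i \<otimes> A i i \<otimes> Cm i i \<in> jacobson R" if i: "i < n" for i
      proof -
        have "(A \<otimes>\<^bsub>upper_tri n R\<^esub> B \<otimes>\<^bsub>upper_tri n R\<^esub> Cm) i i = A i i \<otimes> B i i \<otimes> Cm i i"
          using UT_diag[OF T.m_closed[OF A B] Cm i] UT_diag[OF A B i] by simp
        then have "(A i i \<otimes> B i i \<otimes> Cm i i) [^] k = \<zero>"
          using UT_pow_diag[OF T.m_closed[OF T.m_closed[OF A B] Cm] i, of k] k by (simp add: UT_simps)
        then have "A i i \<otimes> B i i \<otimes> Cm i i \<in> nilpotents R"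
          unfolding nilpotents_def using eA by blast
        then show ?thesis using NJ[unfolded NJ_symmetric_def, rule_format, OF eA(1)[of i] eA(2)[of i] eA(3)[of i]] by blast
      qed
      define X where "X = B \<otimes>\<^bsub>upper_tri n R\<^esub> A \<otimes>\<^bsub>upper_tri n R\<^esub> Cm"
      have Xc: "X \<in> carrier (upper_tri n R)" unfolding X_def using A B Cm by simp
      have Xd: "X i i = B i i \<otimes> A i i \<otimes> Cm i i" if "i < n" for i
        unfolding X_def using UT_diag[OF T.m_closed[OF B A] Cm that] UT_diag[OF B A that] by simp
      have "\<exists>Z\<in>carrier (upper_tri n R). Z \<otimes>\<^bsub>upper_tri n R\<^esub>
          (\<one>\<^bsub>upper_tri n R\<^esub> \<ominus>\<^bsub>upper_tri n R\<^esub> Y \<otimes>\<^bsub>upper_tri n R\<^esub> X) = \<one>\<^bsub>upper_tri n R\<^esub>"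
        if Y: "Y \<in> carrier (upper_tri n R)" for Y
      proof (rule UT_left_inv)
        show "\<one>\<^bsub>upper_tri n R\<^esub> \<ominus>\<^bsub>upper_tri n R\<^esub> Y \<otimes>\<^bsub>upper_tri n R\<^esub> X \<in> carrier (upper_tri n R)"
          using Y Xc by simp
        fix i assume i: "i < n"
        have "(\<one>\<^bsub>upper_tri n R\<^esub> \<ominus>\<^bsub>upper_tri n R\<^esub> Y \<otimes>\<^bsub>upper_tri n R\<^esub> X) i i
            = \<one> \<ominus> Y i i \<otimes> (B i i \<otimes> A i i \<otimes> Cm i i)"
          using UT_minus[OF UT_one_closed T.m_closed[OF Y Xc]] UT_diag[OF Y Xc i] Xd[OF i] i
          by (simp add: UT_simps)
        moreover have "Y i i \<in> carrier R" using UT_entry[OF Y] .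
        moreover have "\<forall>y\<in>carrier R. \<exists>z\<in>carrier R. z \<otimes> (\<one> \<ominus> y \<otimes> (B i i \<otimes> A i i \<otimes> Cm i i)) = \<one>"
          using dJ[OF i, unfolded jacobson_char] by (rule conjunct2)
        ultimately show "\<exists>v\<in>carrier R. v \<otimes> (\<one>\<^bsub>upper_tri n R\<^esub> \<ominus>\<^bsub>upper_tri n R\<^esub> Y \<otimes>\<^bsub>upper_tri n R\<^esub> X) i i = \<one>"
          by simp
      qed
      then have "X \<in> jacobson (upper_tri n R)"
        unfolding T.jacobson_char using Xc by blast
      then show "B \<otimes>\<^bsub>upper_tri n R\<^esub> A \<otimes>\<^bsub>upper_tri n R\<^esub> Cm \<in> jacobson (upper_tri n R)"
        unfolding X_def .
    qed
  next
    assume NJ: "NJ_symmetric (upper_tri n R)"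
    have n0: "0 < n" using assms by simp
    show "NJ_symmetric R" unfolding NJ_symmetric_def
    proof (intro ballI impI)
      fix a b c assume a: "a \<in> carrier R" and b: "b \<in> carrier R" and c: "c \<in> carrier R"
        and nil: "a \<otimes> b \<otimes> c \<in> nilpotents R"
      obtain k where k: "(a \<otimes> b \<otimes> c) [^] (k::nat) = \<zero>" using nil unfolding nilpotents_def by blast
      have "sc n a \<otimes>\<^bsub>upper_tri n R\<^esub> sc n b \<otimes>\<^bsub>upper_tri n R\<^esub> sc n c = sc n (a \<otimes> b \<otimes> c)"
        using a b c by (simp add: sc_mult)
      moreover have "sc n (a \<otimes> b \<otimes> c) [^]\<^bsub>upper_tri n R\<^esub> k = \<zero>\<^bsub>upper_tri n R\<^esub>"
        using a b c k by (simp add: sc_pow) (simp add: sc_def UT_simps)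
      ultimately have "sc n a \<otimes>\<^bsub>upper_tri n R\<^esub> sc n b \<otimes>\<^bsub>upper_tri n R\<^esub> sc n c \<in> nilpotents (upper_tri n R)"
        unfolding nilpotents_def using a b c sc_closed[of "a \<otimes> b \<otimes> c"] by auto
      then have "sc n b \<otimes>\<^bsub>upper_tri n R\<^esub> sc n a \<otimes>\<^bsub>upper_tri n R\<^esub> sc n c \<in> jacobson (upper_tri n R)"
        using NJ[unfolded NJ_symmetric_def, rule_format, OF sc_closed[OF a] sc_closed[OF b] sc_closed[OF c]] by blast
      moreover have "sc n b \<otimes>\<^bsub>upper_tri n R\<^esub> sc n a \<otimes>\<^bsub>upper_tri n R\<^esub> sc n c = sc n (b \<otimes> a \<otimes> c)"
        using a b c by (simp add: sc_mult)
      ultimately have J: "sc n (b \<otimes> a \<otimes> c) \<in> jacobson (upper_tri n R)" by simp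
      have dc: "b \<otimes> a \<otimes> c \<in> carrier R" using a b c by simp
      show "b \<otimes> a \<otimes> c \<in> jacobson R"
        unfolding jacobson_char
      proof (intro conjI ballI)
        show "b \<otimes> a \<otimes> c \<in> carrier R" by (rule dc)
        fix y assume y: "y \<in> carrier R"
        obtain Z where Z: "Z \<in> carrier (upper_tri n R)"
          "Z \<otimes>\<^bsub>upper_tri n R\<^esub> (\<one>\<^bsub>upper_tri n R\<^esub> \<ominus>\<^bsub>upper_tri n R\<^esub> sc n y \<otimes>\<^bsub>upper_tri n R\<^esub> sc n (b \<otimes> a \<otimes> c))
            = \<one>\<^bsub>upper_tri n R\<^esub>"
          using conjunct2[OF J[unfolded T.jacobson_char]] sc_closed[OF y] by blast
        have Wc: "\<one>\<^bsub>upper_tri n R\<^esub> \<ominus>\<^bsub>upper_tri n R\<^esub> sc n y \<otimes>\<^bsub>upper_tri n R\<^esub> sc n (b \<otimes> a \<otimes> c)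
            \<in> carrier (upper_tri n R)" using sc_closed[OF y] sc_closed[OF dc] by simp
        have "(\<one>\<^bsub>upper_tri n R\<^esub> \<ominus>\<^bsub>upper_tri n R\<^esub> sc n y \<otimes>\<^bsub>upper_tri n R\<^esub> sc n (b \<otimes> a \<otimes> c)) 0 0
            = \<one> \<ominus> y \<otimes> (b \<otimes> a \<otimes> c)"
          using UT_minus[OF UT_one_closed sc_closed[of "y \<otimes> (b \<otimes> a \<otimes> c)"]]
            sc_mult[OF y dc] n0 y dc by (simp add: UT_simps(3) sc_def)
        moreover have "Z 0 0 \<otimes> (\<one>\<^bsub>upper_tri n R\<^esub> \<ominus>\<^bsub>upper_tri n R\<^esub> sc n y \<otimes>\<^bsub>upper_tri n R\<^esub> sc n (b \<otimes> a \<otimes> c)) 0 0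
            = \<one>"
        proof -
          have "Z 0 0 \<otimes> (\<one>\<^bsub>upper_tri n R\<^esub> \<ominus>\<^bsub>upper_tri n R\<^esub> sc n y \<otimes>\<^bsub>upper_tri n R\<^esub> sc n (b \<otimes> a \<otimes> c)) 0 0 = (Z \<otimes>\<^bsub>upper_tri n R\<^esub> (\<one>\<^bsub>upper_tri n R\<^esub> \<ominus>\<^bsub>upper_tri n R\<^esub> sc n y \<otimes>\<^bsub>upper_tri n R\<^esub> sc n (b \<otimes> a \<otimes> c))) 0 0"
            using UT_diag[OF Z(1) Wc n0] by (rule sym)
          also have "\<dots> = \<one>\<^bsub>upper_tri n R\<^esub> 0 0" by (subst Z(2)) (rule refl)
          also have "\<dots> = \<one>" using n0 by (simp only: UT_simps(3)) simp
          finally show ?thesis .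
        qed
        ultimately show "\<exists>z\<in>carrier R. z \<otimes> (\<one> \<ominus> y \<otimes> (b \<otimes> a \<otimes> c)) = \<one>"
          using UT_entry[OF Z(1), of 0 0] by (intro bexI[of _ "Z 0 0"]) simp_all
      qed
    qed
  qed
qed


theorem corollary2p23:
  fixes R :: "('a, 'b) ring_scheme" and n :: nat
  assumes "ring R" and "n \<ge> 1"
  shows "NJ_symmetric R \<longleftrightarrow> NJ_symmetric (upper_tri n R)"
  using ring.main[OF assms] .

end
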